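(* Let $0\le\underline{\tau}<\overline{\tau}<\infty$, $\gamma\ge0$, let $f$ be a piecewise continuous probability density supported on $[\underline{\tau},\overline{\tau}]$, and let $\beta:[0,\infty)\to(0,\infty)$ be continuous and decreasing with $\lim_{x\to+\infty}\beta(x)=0$ and with $x\mapsto x\beta(x)$ Lipschitz. Assume $\delta=0$ and $$\int_{\underline{\tau}}^{\overline{\tau}}e^{-\gamma\tau}f(\tau)\,d\tau>\frac12,$$ and assume there exists $\overline{x}\ge0$ such that $x\mapsto x\beta(x)$ is decreasing on $[\overline{x},\infty)$. For $\mu\ge0$ let $x(t)$ be the unique continuous solution on $[0,\infty)$ of: $x(0)=\mu$; $$x'(t)=-\beta(x(t))x(t)+2\beta(\mu)\mu\int_{\underline{\tau}}^{\overline{\tau}}e^{-\gamma\tau}f(\tau)d\tau,\quad 0\le t\le\underline{\tau};$$ $$x'(t)=-\beta(x(t))x(t)+2\beta(\mu)\mu\int_t^{\overline{\tau}}e^{-\gamma\tau}f(\tau)d\tau+2\int_{\underline{\tau}}^{t}e^{-\gamma\tau}f(\tau)\beta(x(t-\tau))x(t-\tau)d\tau,\quad \underline{\tau}\le t\le\overline{\tau};$$ $$x'(t)=-\beta(x(t))x(t)+2\int_{\underline{\tau}}^{\overline{\tau}}e^{-\gamma\tau}f(\tau)\beta(x(t-\tau))x(t-\tau)d\tau,\quad t\ge\overline{\tau}.$$ If $\mu\ge\overline{x}$, then $\lim_{t\to+\infty}x(t)=+\infty$.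
   Context: This $x(t)$ is the total resting stem cell population in an age-structured hematopoiesis model (with resting-cell loss rate $\delta=0$, proliferating-cell apoptosis rate $\gamma$, entry rate $\beta(x)$ into proliferation, and division-time density $f$), where the initial resting population is $\mu$ and the initial proliferating age distribution is the one consistent with the model. *)

theory Defs
  imports "HOL-Analysis.Analysis"
begin

definition piecewise_continuous_on :: "real \<Rightarrow> real \<Rightarrow> (real \<Rightarrow> real) \<Rightarrow> bool" where
  "piecewise_continuous_on a b g \<longleftrightarrow>
     (\<exists>S. finite S \<and> continuous_on ({a..b} - S) g \<and>
        (\<forall>s\<in>S. (s > a \<longrightarrow> (\<exists>l. (g \<longlongrightarrow> l) (at_left s))) \<and>
                (s < b \<longrightarrow> (\<exists>r. (g \<longlongrightarrow> r) (at_right s)))))"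

definition pc_density_on :: "real \<Rightarrow> real \<Rightarrow> (real \<Rightarrow> real) \<Rightarrow> bool" where
  "pc_density_on a b g \<longleftrightarrow>
     (\<forall>t. 0 \<le> g t) \<and> (\<forall>t. t \<notin> {a..b} \<longrightarrow> g t = 0) \<and>
     piecewise_continuous_on a b g \<and>
     g integrable_on {a..b} \<and> integral {a..b} g = 1"

end

theory Submission
  imports Defs
begin

lemma int_prod:
  fixes f g :: "real \<Rightarrow> real"
  assumes "f integrable_on {a..b}" "\<forall>s\<in>{a..b}. 0 \<le> f s" "continuous_on {a..b} g"
  shows "(\<lambda>s. f s * g s) integrable_on {a..b}"
proof -
  have "f absolutely_integrable_on {a..b}" using assms by (intro nonnegative_absolutely_integrable_1) auto
  moreover have "g \<in> borel_measurable (lebesgue_on {a..b})"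
    using assms(3) by (intro continuous_imp_measurable_on_sets_lebesgue) auto
  moreover have "bounded (g ` {a..b})"
    using assms(3) by (intro compact_imp_bounded compact_continuous_image) auto
  ultimately have "(\<lambda>s. g s * f s) absolutely_integrable_on {a..b}"
    by (intro absolutely_integrable_bounded_measurable_product_real) auto
  then have "(\<lambda>s. g s * f s) integrable_on {a..b}" by (simp add: absolutely_integrable_on_def)
  moreover have "(\<lambda>s. f s * g s) = (\<lambda>s. g s * f s)" by (simp add: fun_eq_iff mult.commute)
  ultimately show ?thesis by simp
qed

lemma mono_deriv:
  fixes x :: "real \<Rightarrow> real"
  assumes "0 \<le> a" "\<forall>t\<in>{a..b}. \<exists>D. (x has_real_derivative D) (at t within {0..}) \<and> c \<le> D"
    "a \<le> u" "u \<le> v" "v \<le> b"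
  shows "c * (v - u) \<le> x v - x u"
proof -
  obtain D where D: "\<forall>t\<in>{a..b}. (x has_real_derivative D t) (at t within {0..}) \<and> c \<le> D t"
    using bchoice[OF assms(2)] by blast
  have "\<exists>y\<in>{u..v}. x v - x u = (\<lambda>t h. D t * h) y (v - u)"
  proof (rule mvt_very_simple[OF assms(4)])
    fix t assume t: "u \<le> t" "t \<le> v"
    then have "(x has_real_derivative D t) (at t within {0..})" using D assms by auto
    then have "(x has_real_derivative D t) (at t within {u..v})"
      by (rule DERIV_subset) (use assms in auto)
    then show "(x has_derivative (\<lambda>h. D t * h)) (at t within {u..v})"
      by (simp add: has_field_derivative_def)
  qed
  then obtain y where y: "y \<in> {u..v}" "x v - x u = D y * (v - u)" by auto
  have "c \<le> D y" using D y assms by auto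
  then show ?thesis using y assms by (simp add: mult_right_mono)
qed

theorem proposition2p3:
  fixes tl tu \<gamma> \<mu> xbar :: real
    and f \<beta> x :: "real \<Rightarrow> real"
  assumes tau: "0 \<le> tl" "tl < tu"
    and gamma: "\<gamma> \<ge> 0"
    and dens: "pc_density_on tl tu f"
    and beta_cont: "continuous_on {0..} \<beta>"
    and beta_pos: "\<forall>y\<ge>0. \<beta> y > 0"
    and beta_dec: "\<forall>y z. 0 \<le> y \<longrightarrow> y \<le> z \<longrightarrow> \<beta> z \<le> \<beta> y"
    and beta_lim: "(\<beta> \<longlongrightarrow> 0) at_top"
    and beta_lip: "\<exists>L. lipschitz_on L {0..} (\<lambda>y. y * \<beta> y)"
    and cond: "integral {tl..tu} (\<lambda>s. exp (- \<gamma> * s) * f s) > 1/2"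
    and xbar: "xbar \<ge> 0"
    and xbar_dec: "\<forall>y z. xbar \<le> y \<longrightarrow> y \<le> z \<longrightarrow> z * \<beta> z \<le> y * \<beta> y"
    and mu: "\<mu> \<ge> 0"
    and x_cont: "continuous_on {0..} x"
    and x0: "x 0 = \<mu>"
    and ode1: "\<forall>t. 0 \<le> t \<and> t \<le> tl \<longrightarrow>
       (x has_real_derivative
          (- \<beta> (x t) * x t
           + 2 * \<beta> \<mu> * \<mu> * integral {tl..tu} (\<lambda>s. exp (- \<gamma> * s) * f s)))
       (at t within {0..})"
    and ode2: "\<forall>t. tl \<le> t \<and> t \<le> tu \<longrightarrow>
       (x has_real_derivative
          (- \<beta> (x t) * x t
           + 2 * \<beta> \<mu> * \<mu> * integral {t..tu} (\<lambda>s. exp (- \<gamma> * s) * f s)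
           + 2 * integral {tl..t} (\<lambda>s. exp (- \<gamma> * s) * f s * \<beta> (x (t - s)) * x (t - s))))
       (at t within {0..})"
    and ode3: "\<forall>t. tu \<le> t \<longrightarrow>
       (x has_real_derivative
          (- \<beta> (x t) * x t
           + 2 * integral {tl..tu} (\<lambda>s. exp (- \<gamma> * s) * f s * \<beta> (x (t - s)) * x (t - s))))
       (at t within {0..})"
    and mu_ge: "\<mu> \<ge> xbar"
  shows "filterlim x at_top at_top"
proof -
  define w where "w = (\<lambda>s. exp (- \<gamma> * s) * f s)"
  define h where "h = (\<lambda>y. \<beta> y * y)"
  define K where "K = integral {tl..tu} w"
  have K: "K > 1/2" using cond by (simp add: K_def w_def)
  from dens have f0: "\<forall>t. 0 \<le> f t" and fint: "f integrable_on {tl..tu}"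
    unfolding pc_density_on_def by auto
  have w0: "\<forall>s. 0 \<le> w s" by (simp add: w_def f0)
  have wint: "w integrable_on {tl..tu}"
  proof -
    have "(\<lambda>s. f s * exp (- \<gamma> * s)) integrable_on {tl..tu}"
      by (rule int_prod) (use fint f0 in \<open>auto intro!: continuous_intros\<close>)
    then show ?thesis by (simp add: w_def mult.commute)
  qed
  have wsub: "w integrable_on {a..b}" if "tl \<le> a" "b \<le> tu" for a b
    using integrable_subinterval_real[OF wint, of a b] that by auto
  have hcont: "continuous_on {0..} h" unfolding h_def
    by (intro continuous_intros beta_cont)
  have xbar_pos: "xbar > 0"
  proof (rule ccontr)
    assume "\<not> xbar > 0" then have "xbar = 0" using xbar by auto
    then have "1 * \<beta> 1 \<le> 0 * \<beta> 0" using xbar_dec by (metis order_refl zero_le_one)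
    then show False using beta_pos by (metis mult_1 mult_zero_left not_le zero_le_one)
  qed
  have hdec: "h z \<le> h y" if "xbar \<le> y" "y \<le> z" for y z
    using xbar_dec that by (simp add: h_def mult.commute)
  have hpos: "h y > 0" if "y > 0" for y using beta_pos that by (simp add: h_def)
  have Jlb: "m * integral {a..b} w \<le> integral {a..b} (\<lambda>s. w s * h (x (t - s)))"
    if "tl \<le> a" "a \<le> b" "b \<le> tu" "\<forall>s\<in>{a..b}. 0 \<le> t - s \<and> t - s \<le> t"
       "\<forall>v\<in>{0..t}. 0 \<le> x v \<and> m \<le> h (x v)" for a b t m
  proof -
    have c1: "continuous_on {a..b} (\<lambda>s. x (t - s))"
      by (rule continuous_on_compose2[OF x_cont, of _ "\<lambda>s. t - s"])
         (use that in \<open>auto intro!: continuous_intros\<close>)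
    have gc: "continuous_on {a..b} (\<lambda>s. h (x (t - s)))"
      by (rule continuous_on_compose2[OF hcont c1]) (use that in force)
    have "integral {a..b} (\<lambda>s. m * w s) \<le> integral {a..b} (\<lambda>s. w s * h (x (t - s)))"
    proof (rule integral_le)
      show "(\<lambda>s. m * w s) integrable_on {a..b}"
        using integrable_on_cmult_left[OF wsub[OF that(1,3)], of m] by simp
      show "(\<lambda>s. w s * h (x (t - s))) integrable_on {a..b}"
        by (rule int_prod[OF wsub[OF that(1,3)] _ gc]) (use w0 in auto)
      fix s assume "s \<in> {a..b}"
      then have "m \<le> h (x (t - s))" using that by force
      then have "m * w s \<le> h (x (t - s)) * w s" using w0 by (simp add: mult_right_mono)
      then show "m * w s \<le> w s * h (x (t - s))" by (simp add: mult.commute)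
    qed
    then show ?thesis by simp
  qed
  have K0: "K \<ge> 0" using K by simp
  have lb: "\<exists>D. (x has_real_derivative D) (at t within {0..}) \<and> 2*K*m - h (x t) \<le> D"
    if t0: "0 \<le> t" and m\<mu>: "m \<le> h \<mu>" and hv: "\<forall>v\<in>{0..t}. 0 \<le> x v \<and> m \<le> h (x v)" for t m
  proof -
    have feq: "(\<lambda>s. exp (- \<gamma> * s) * f s * \<beta> (x (t - s)) * x (t - s)) = (\<lambda>s. w s * h (x (t - s)))"
      by (simp add: fun_eq_iff w_def h_def mult.assoc)
    consider "t \<le> tl" | "tl \<le> t" "t \<le> tu" | "tu \<le> t" by linarith
    then show ?thesis
    proof cases
      case 1
      have d: "(x has_real_derivative (- h (x t) + 2 * h \<mu> * K)) (at t within {0..})"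
      proof -
        have "- \<beta> (x t) * x t + 2 * \<beta> \<mu> * \<mu> * integral {tl..tu} (\<lambda>s. exp (- \<gamma> * s) * f s)
           = - h (x t) + 2 * h \<mu> * K" (is "?l = _") by (simp add: h_def K_def w_def algebra_simps)
        moreover have "(x has_real_derivative ?l) (at t within {0..})" using ode1 t0 1 by blast
        ultimately show ?thesis by (simp only:)
      qed
      have "K*m \<le> K * h \<mu>" by (rule mult_left_mono[OF m\<mu> K0])
      then show ?thesis using d by (intro exI[of _ "- h (x t) + 2 * h \<mu> * K"]) (auto simp: algebra_simps)
    next
      case 2
      define I1 where "I1 = integral {t..tu} w"
      define I2 where "I2 = integral {tl..t} w"
      define J where "J = integral {tl..t} (\<lambda>s. w s * h (x (t - s)))"
      have d: "(x has_real_derivative (- h (x t) + 2 * h \<mu> * I1 + 2 * J)) (at t within {0..})"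
      proof -
        have "- \<beta> (x t) * x t + 2 * \<beta> \<mu> * \<mu> * integral {t..tu} (\<lambda>s. exp (- \<gamma> * s) * f s)
           + 2 * integral {tl..t} (\<lambda>s. exp (- \<gamma> * s) * f s * \<beta> (x (t - s)) * x (t - s))
           = - h (x t) + 2 * h \<mu> * I1 + 2 * J"
          (is "?l = _") unfolding feq by (simp add: h_def I1_def J_def w_def algebra_simps)
        moreover have "(x has_real_derivative ?l) (at t within {0..})" using ode2 2 by blast
        ultimately show ?thesis by (simp only:)
      qed
      have JJ: "m * I2 \<le> J" unfolding I2_def J_def
        by (rule Jlb) (use 2 tau hv in auto)
      have sum: "I2 + I1 = K" unfolding I1_def I2_def K_def
        by (rule Henstock_Kurzweil_Integration.integral_combine) (use 2 wint in auto)
      have I10: "I1 \<ge> 0" unfolding I1_def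
        by (rule integral_nonneg) (use wsub 2 tau w0 in auto)
      have "m * I1 \<le> h \<mu> * I1" by (rule mult_right_mono[OF m\<mu> I10])
      then have "2*K*m - h (x t) \<le> - h (x t) + 2 * h \<mu> * I1 + 2 * J"
        using JJ sum[symmetric] by (simp add: algebra_simps)
      then show ?thesis using d by blast
    next
      case 3
      define J where "J = integral {tl..tu} (\<lambda>s. w s * h (x (t - s)))"
      have d: "(x has_real_derivative (- h (x t) + 2 * J)) (at t within {0..})"
      proof -
        have "- \<beta> (x t) * x t
           + 2 * integral {tl..tu} (\<lambda>s. exp (- \<gamma> * s) * f s * \<beta> (x (t - s)) * x (t - s))
           = - h (x t) + 2 * J"
          (is "?l = _") unfolding feq by (simp add: h_def J_def algebra_simps)
        moreover have "(x has_real_derivative ?l) (at t within {0..})" using ode3 3 by blast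
        ultimately show ?thesis by (simp only:)
      qed
      have JJ: "m * K \<le> J" unfolding K_def J_def
        by (rule Jlb) (use 3 tau hv in auto)
      then show ?thesis using d by (intro exI[of _ "- h (x t) + 2 * J"]) (auto simp: algebra_simps)
    qed
  qed
  define P where "P = (\<lambda>t. \<forall>u v. 0 \<le> u \<longrightarrow> u \<le> v \<longrightarrow> v \<le> t \<longrightarrow> x u \<le> x v)"
  have \<mu>pos: "\<mu> > 0" using xbar_pos mu_ge by linarith
  have step: "\<exists>d>0. P (T + d)" if T0: "0 \<le> T" and PT: "P T" for T
  proof -
    have xmT: "\<forall>v\<in>{0..T}. \<mu> \<le> x v \<and> x v \<le> x T"
      using PT x0 T0 unfolding P_def by (metis atLeastAtMost_iff order_refl)
    then have xT: "\<mu> \<le> x T" using T0 by auto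
    define a where "a = h (x T)"
    have a0: "a > 0" unfolding a_def using hpos xT \<mu>pos by auto
    have a\<mu>: "a \<le> h \<mu>" unfolding a_def using hdec mu_ge xT by auto
    define e where "e = a * (2*K - 1) / (2*(2*K+1))"
    have e0: "e > 0" unfolding e_def using a0 K by (intro divide_pos_pos mult_pos_pos) auto
    have eK: "e*(2*K+1) = a*(2*K-1)/2" unfolding e_def using K by (simp add: field_simps)
    have aK: "a*(2*K-1) > 0" using a0 K by (intro mult_pos_pos) auto
    have contx: "(x \<longlongrightarrow> x T) (at T within {0..})" using x_cont T0 by (simp add: continuous_on_def)
    have hc: "isCont h (x T)"
      by (rule continuous_on_interior[OF hcont]) (use xT \<mu>pos in auto)
    have ev1: "eventually (\<lambda>v. x v > 0) (at T within {0..})"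
      using order_tendstoD(1)[OF contx, of 0] xT \<mu>pos by auto
    have ev2: "eventually (\<lambda>v. dist (h (x v)) a < e) (at T within {0..})"
      using tendstoD[OF isCont_tendsto_compose[OF hc contx] e0] unfolding a_def by auto
    obtain d where d: "d > 0" "\<forall>v\<in>{0..}. 0 < dist v T \<and> dist v T < d \<longrightarrow> x v > 0 \<and> dist (h (x v)) a < e"
      using eventually_conj[OF ev1 ev2] unfolding eventually_at by auto
    have near: "x v > 0 \<and> a - e < h (x v) \<and> h (x v) < a + e" if "T < v" "v \<le> T + d/2" for v
      using d(2)[rule_format, of v] that T0 d(1) by (auto simp: dist_real_def abs_less_iff)
    have pos: "\<forall>u\<in>{T..T+d/2}. \<exists>D. (x has_real_derivative D) (at u within {0..}) \<and> 0 \<le> D"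
    proof
      fix u assume u: "u \<in> {T..T+d/2}"
      have hv: "\<forall>v\<in>{0..u}. 0 \<le> x v \<and> a - e \<le> h (x v)"
      proof
        fix v assume v: "v \<in> {0..u}"
        show "0 \<le> x v \<and> a - e \<le> h (x v)"
        proof (cases "v \<le> T")
          case True
          then have "\<mu> \<le> x v" "x v \<le> x T" using xmT v by auto
          then have "a \<le> h (x v)" unfolding a_def using hdec mu_ge by auto
          then show ?thesis using \<open>\<mu> \<le> x v\<close> \<mu>pos e0 by auto
        next
          case False then show ?thesis using near[of v] v u by auto
        qed
      qed
      have hu: "h (x u) \<le> a + e"
      proof (cases "u = T")
        case True then show ?thesis using e0 a_def by auto
      next
        case False then show ?thesis using near[of u] u by auto
      qed
      obtain D where D: "(x has_real_derivative D) (at u within {0..})" "2*K*(a-e) - h (x u) \<le> D"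
        using lb[of u "a - e"] u T0 a\<mu> e0 hv by auto
      have "2*K*(a-e) - (a+e) = a*(2*K-1) - e*(2*K+1)" by (simp add: algebra_simps)
      then have "0 \<le> D" using D(2) hu eK aK by linarith
      then show "\<exists>D. (x has_real_derivative D) (at u within {0..}) \<and> 0 \<le> D" using D(1) by blast
    qed
    have "P (T + d/2)" unfolding P_def
    proof (intro allI impI)
      fix u v assume uv: "0 \<le> u" "u \<le> v" "v \<le> T + d/2"
      show "x u \<le> x v"
      proof (cases "v \<le> T")
        case True then show ?thesis using PT uv unfolding P_def by auto
      next
        case False
        have xTv: "x T \<le> x v" using mono_deriv[OF T0 pos, of T v] False uv by auto
        show ?thesis
        proof (cases "u \<le> T")
          case True
          then have "x u \<le> x T" using xmT uv by auto
          then show ?thesis using xTv by linarith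
        next
          case False then show ?thesis using mono_deriv[OF T0 pos, of u v] uv by auto
        qed
      qed
    qed
    then show ?thesis using d(1) by (intro exI[of _ "d/2"]) auto
  qed
  have Pmono: "P t1" if "P t2" "t1 \<le> t2" for t1 t2 using that unfolding P_def by auto
  have mono: "\<forall>t\<ge>0. P t"
  proof (rule ccontr)
    assume "\<not> (\<forall>t\<ge>0. P t)"
    then obtain t1 where t1: "t1 \<ge> 0" "\<not> P t1" by auto
    define S where "S = {t. 0 \<le> t \<and> P t}"
    have S0: "0 \<in> S" unfolding S_def P_def by (auto, metis antisym order_trans order_refl)
    have bdd: "\<forall>t\<in>S. t \<le> t1"
    proof
      fix t assume "t \<in> S"
      then have Pt: "P t" by (simp add: S_def)
      show "t \<le> t1"
      proof (rule ccontr)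
        assume "\<not> t \<le> t1"
        then have "P t1" using Pmono[OF Pt] by simp
        with t1 show False by simp
      qed
    qed
    then have bddS: "bdd_above S" by (auto simp: bdd_above_def)
    define T where "T = Sup S"
    have T0: "0 \<le> T" unfolding T_def by (rule cSup_upper[OF S0 bddS])
    have PT: "P T" unfolding P_def
    proof (intro allI impI)
      fix u v assume uv: "0 \<le> u" "u \<le> v" "v \<le> T"
      show "x u \<le> x v"
      proof (cases "v < T")
        case True
        then obtain s where "s \<in> S" "v < s"
          using less_cSup_iff[OF _ bddS, of v] S0 unfolding T_def by auto
        then show ?thesis using uv unfolding S_def P_def by auto
      next
        case False
        then have vT: "v = T" using uv by auto
        show ?thesis
        proof (cases "u = T")
          case True then show ?thesis using vT by simp
        next
          case False
          then have uT: "u < T" using uv vT by auto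
          have ev: "eventually (\<lambda>w. x u \<le> x w) (at_left T)"
            unfolding eventually_at_left[OF uT]
          proof (intro exI[of _ u] conjI allI impI)
            fix w assume w: "u < w" "w < T"
            then obtain s where "s \<in> S" "w < s"
              using less_cSup_iff[OF _ bddS, of w] S0 unfolding T_def by auto
            then show "x u \<le> x w" using uv w unfolding S_def P_def by auto
          qed (use uT in auto)
          have "isCont x T"
            by (rule continuous_on_interior[OF x_cont]) (use uT uv in auto)
          then have "(x \<longlongrightarrow> x T) (at_left T)"
            by (simp add: isCont_def filterlim_at_split)
          then have "x u \<le> x T"
            by (rule tendsto_lowerbound[OF _ ev]) simp
          then show ?thesis using vT by simp
        qed
      qed
    qed
    obtain d where d: "d > 0" "P (T + d)" using step[OF T0 PT] by blast
    then have "T + d \<in> S" using T0 unfolding S_def by auto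
    then have "T + d \<le> T" unfolding T_def by (rule cSup_upper[OF _ bddS])
    then show False using d by auto
  qed
  have xge: "\<mu> \<le> x t" if "0 \<le> t" for t using mono that x0 unfolding P_def by force
  have xle: "x s \<le> x t" if "0 \<le> s" "s \<le> t" for s t
  proof -
    have "P t" using mono that by auto
    then show ?thesis using that unfolding P_def by blast
  qed
  have unb: "\<exists>t\<ge>0. M < x t" for M
  proof (rule ccontr)
    assume "\<not> (\<exists>t\<ge>0. M < x t)"
    then have xM: "\<forall>t\<ge>0. x t \<le> M" by auto
    then have M\<mu>: "\<mu> \<le> M" using x0 by force
    define c where "c = (2*K - 1) * h M"
    have c0: "c > 0" unfolding c_def using K hpos[of M] M\<mu> \<mu>pos by (intro mult_pos_pos) auto
    have der: "\<forall>t\<in>{0..t2}. \<exists>D. (x has_real_derivative D) (at t within {0..}) \<and> c \<le> D" for t2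
    proof
      fix t assume t: "t \<in> {0..t2}"
      have hv: "\<forall>v\<in>{0..t}. 0 \<le> x v \<and> h (x t) \<le> h (x v)"
      proof
        fix v assume v: "v \<in> {0..t}"
        have "\<mu> \<le> x v" "x v \<le> x t" using xge xle v by auto
        then show "0 \<le> x v \<and> h (x t) \<le> h (x v)" using hdec mu_ge \<mu>pos by auto
      qed
      have "h (x t) \<le> h \<mu>" using hdec mu_ge xge t by auto
      then obtain D where D: "(x has_real_derivative D) (at t within {0..})" "2*K*h (x t) - h (x t) \<le> D"
        using lb[of t "h (x t)"] t hv by auto
      have "h M \<le> h (x t)" using hdec xge xM t mu_ge by (meson atLeastAtMost_iff order_trans)
      then have "(2*K - 1) * h M \<le> (2*K - 1) * h (x t)" using K by (intro mult_left_mono) auto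
      then have "c \<le> D" using D(2) unfolding c_def by (simp add: algebra_simps)
      then show "\<exists>D. (x has_real_derivative D) (at t within {0..}) \<and> c \<le> D" using D(1) by blast
    qed
    define t2 where "t2 = (M - \<mu>) / c + 1"
    have t20: "0 \<le> t2" unfolding t2_def using M\<mu> c0 by auto
    have "c * (t2 - 0) \<le> x t2 - x 0" by (rule mono_deriv[OF _ der]) (use t20 in auto)
    moreover have "c * t2 = M - \<mu> + c" unfolding t2_def using c0 by (simp add: field_simps)
    ultimately show False using xM t20 x0 c0 by force
  qed
  show ?thesis unfolding filterlim_at_top eventually_at_top_linorder
  proof
    fix Z
    obtain t where t: "t \<ge> 0" "Z < x t" using unb by blast
    show "\<exists>N. \<forall>n\<ge>N. Z \<le> x n"
      using t xle by (intro exI[of _ t]) force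
  qed
qed

end
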